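(* Let $L$ be a linear forest with $k$ vertices and let $P_n$ be the path with vertices $w_1,\dots,w_n$ in order. For an index $h$, let $s'_h(P_n,L)$ be the number of vertex subsets $X\subseteq V(P_n)$ with $w_h\in X$ such that $P_n[X]$ is isomorphic to $L$ and $w_h$ is an isolated vertex of $P_n[X]$. Then $s'_h(P_n,L)$ has the same value for all $h$ with $k\le h\le n-k+1$.
   Context: A linear forest is a disjoint union of paths; $P_n[X]$ denotes the subgraph of $P_n$ induced by $X$. *)

theory Defs
  imports Main
begin

type_synonym 'a graph = "'a set \<times> 'a set set"

definition verts :: "'a graph \<Rightarrow> 'a set" where "verts G = fst G"
definition edges :: "'a graph \<Rightarrow> 'a set set" where "edges G = snd G"

definition simple_graph :: "'a graph \<Rightarrow> bool" where
  "simple_graph G \<longleftrightarrow> finite (verts G) \<and>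
     (\<forall>e\<in>edges G. \<exists>u v. u \<in> verts G \<and> v \<in> verts G \<and> u \<noteq> v \<and> e = {u, v})"

definition induced :: "'a graph \<Rightarrow> 'a set \<Rightarrow> 'a graph" where
  "induced G X = (X \<inter> verts G, {e \<in> edges G. e \<subseteq> X})"

definition graph_iso :: "'a graph \<Rightarrow> 'b graph \<Rightarrow> bool" where
  "graph_iso G H \<longleftrightarrow> (\<exists>f. bij_betw f (verts G) (verts H) \<and>
     (\<forall>u\<in>verts G. \<forall>v\<in>verts G. {u, v} \<in> edges G \<longleftrightarrow> {f u, f v} \<in> edges H))"

text \<open>The path P_n with vertices w_1, ..., w_n (w_i = i) in order.\<close>
definition path_graph :: "nat \<Rightarrow> nat graph" where
  "path_graph n = ({1..n}, {{i, i + 1} | i. 1 \<le> i \<and> i < n})"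

definition is_path :: "'a graph \<Rightarrow> bool" where
  "is_path G \<longleftrightarrow> (\<exists>m\<ge>1. graph_iso (path_graph m) G)"

definition linear_forest :: "'a graph \<Rightarrow> bool" where
  "linear_forest G \<longleftrightarrow> simple_graph G \<and>
     (\<exists>\<C>. \<Union>\<C> = verts G \<and> (\<forall>C\<in>\<C>. \<forall>D\<in>\<C>. C \<noteq> D \<longrightarrow> C \<inter> D = {}) \<and>
          (\<forall>C\<in>\<C>. is_path (induced G C)) \<and>
          (\<forall>e\<in>edges G. \<exists>C\<in>\<C>. e \<subseteq> C))"

definition isolated_in :: "'a \<Rightarrow> 'a graph \<Rightarrow> bool" where
  "isolated_in v G \<longleftrightarrow> v \<in> verts G \<and> (\<forall>e\<in>edges G. v \<notin> e)"

definition s_prime :: "nat \<Rightarrow> nat \<Rightarrow> 'b graph \<Rightarrow> nat" where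
  "s_prime h n L = card {X. X \<subseteq> verts (path_graph n) \<and> h \<in> X \<and>
       graph_iso (induced (path_graph n) X) L \<and> isolated_in h (induced (path_graph n) X)}"

end

theory Submission imports Defs begin

definition adj :: "nat \<Rightarrow> nat \<Rightarrow> bool" where
  "adj u v \<longleftrightarrow> u + 1 = v \<or> v + 1 = u"

definition sim :: "nat set \<Rightarrow> nat set \<Rightarrow> bool" where
  "sim X Y \<longleftrightarrow> (\<exists>f. bij_betw f X Y \<and> (\<forall>u\<in>X. \<forall>v\<in>X. adj u v \<longleftrightarrow> adj (f u) (f v)))"

lemma sim_refl: "sim X X"
  unfolding sim_def by (rule exI[of _ id]) auto

lemma sim_sym: assumes "sim X Y" shows "sim Y X"
proof -
  obtain f where f: "bij_betw f X Y" "\<forall>u\<in>X. \<forall>v\<in>X. adj u v \<longleftrightarrow> adj (f u) (f v)"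
    using assms unfolding sim_def by blast
  let ?g = "inv_into X f"
  have "bij_betw ?g Y X" using f(1) by (rule bij_betw_inv_into)
  moreover have "\<forall>u\<in>Y. \<forall>v\<in>Y. adj u v \<longleftrightarrow> adj (?g u) (?g v)"
  proof (intro ballI)
    fix u v assume uv: "u \<in> Y" "v \<in> Y"
    have "?g u \<in> X" "?g v \<in> X" "f (?g u) = u" "f (?g v) = v"
      using f(1) uv by (auto simp: bij_betw_def inv_into_into f_inv_into_f)
    then show "adj u v \<longleftrightarrow> adj (?g u) (?g v)" using f(2) by metis
  qed
  ultimately show ?thesis unfolding sim_def by blast
qed

lemma sim_trans: assumes "sim X Y" "sim Y Z" shows "sim X Z"
proof -
  obtain f where f: "bij_betw f X Y" "\<forall>u\<in>X. \<forall>v\<in>X. adj u v \<longleftrightarrow> adj (f u) (f v)"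
    using assms(1) unfolding sim_def by blast
  obtain g where g: "bij_betw g Y Z" "\<forall>u\<in>Y. \<forall>v\<in>Y. adj u v \<longleftrightarrow> adj (g u) (g v)"
    using assms(2) unfolding sim_def by blast
  have "bij_betw (g \<circ> f) X Z" using f(1) g(1) by (rule bij_betw_trans)
  moreover have "\<forall>u\<in>X. \<forall>v\<in>X. adj u v \<longleftrightarrow> adj ((g \<circ> f) u) ((g \<circ> f) v)"
    using f g bij_betwE[OF f(1)] by simp
  ultimately show ?thesis unfolding sim_def by blast
qed

lemma sim_union:
  assumes "sim A A'" "sim B B'" "A \<inter> B = {}" "A' \<inter> B' = {}"
    "\<forall>x\<in>A. \<forall>y\<in>B. \<not> adj x y" "\<forall>x\<in>A'. \<forall>y\<in>B'. \<not> adj x y"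
  shows "sim (A \<union> B) (A' \<union> B')"
proof -
  obtain f where f: "bij_betw f A A'" "\<forall>u\<in>A. \<forall>v\<in>A. adj u v \<longleftrightarrow> adj (f u) (f v)"
    using assms(1) unfolding sim_def by blast
  obtain g where g: "bij_betw g B B'" "\<forall>u\<in>B. \<forall>v\<in>B. adj u v \<longleftrightarrow> adj (g u) (g v)"
    using assms(2) unfolding sim_def by blast
  define h where "h x = (if x \<in> A then f x else g x)" for x
  have h1: "bij_betw h A A'" using f(1) unfolding h_def by (rule bij_betw_cong[THEN iffD1, rotated]) auto
  have h2: "bij_betw h B B'"
  proof -
    have "\<forall>x\<in>B. h x = g x" using assms(3) unfolding h_def by auto
    then show ?thesis using g(1) bij_betw_cong by metis
  qed
  have "bij_betw h (A \<union> B) (A' \<union> B')" using h1 h2 assms(4) by (rule bij_betw_combine)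
  moreover have "\<forall>u\<in>A \<union> B. \<forall>v\<in>A \<union> B. adj u v \<longleftrightarrow> adj (h u) (h v)"
  proof (intro ballI)
    fix u v assume uv: "u \<in> A \<union> B" "v \<in> A \<union> B"
    have sa: "adj x y = adj y x" for x y unfolding adj_def by auto
    show "adj u v \<longleftrightarrow> adj (h u) (h v)"
    proof (cases "u \<in> A")
      case True
      then show ?thesis
      proof (cases "v \<in> A")
        case True then show ?thesis using \<open>u \<in> A\<close> f(2) h_def by auto
      next
        case False
        then have "v \<in> B" using uv by auto
        then have "h v \<in> B'" "h u \<in> A'" using h1 h2 \<open>u \<in> A\<close> bij_betwE by blast+
        then show ?thesis using assms(5,6) \<open>u \<in> A\<close> \<open>v \<in> B\<close> by auto
      qed
    next
      case False
      then have "u \<in> B" using uv by auto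
      show ?thesis
      proof (cases "v \<in> A")
        case True
        then have "h u \<in> B'" "h v \<in> A'" using h1 h2 \<open>u \<in> B\<close> bij_betwE by blast+
        then show ?thesis using assms(5,6) \<open>v \<in> A\<close> \<open>u \<in> B\<close> sa by metis
      next
        case False
        then have "v \<in> B" using uv by auto
        then show ?thesis using \<open>u \<in> B\<close> \<open>u \<notin> A\<close> \<open>v \<notin> A\<close> g(2) h_def by auto
      qed
    qed
  qed
  ultimately show ?thesis unfolding sim_def by blast
qed

lemma sim_shift: "sim A ((\<lambda>x. x + d) ` A)"
proof -
  have "bij_betw (\<lambda>x. x + d) A ((\<lambda>x. x + d) ` A)" by (rule bij_betw_imageI) (auto simp: inj_on_def)
  moreover have "\<forall>u\<in>A. \<forall>v\<in>A. adj u v \<longleftrightarrow> adj (u + d) (v + d)" by (auto simp: adj_def)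
  ultimately show ?thesis unfolding sim_def by blast
qed

lemma sim_interval: "sim {a..<a+s} {c..<c+(s::nat)}"
proof -
  have 1: "{a..<a+s} = (\<lambda>x. x + a) ` {0..<s}" by (simp add: image_add_atLeastLessThan' add.commute)
  have 2: "{c..<c+s} = (\<lambda>x. x + c) ` {0..<s}" by (simp add: image_add_atLeastLessThan' add.commute)
  show ?thesis unfolding 1 2 by (rule sim_trans[OF sim_sym[OF sim_shift] sim_shift])
qed

lemma sim_finite: "sim X Y \<Longrightarrow> finite X \<Longrightarrow> finite Y"
  unfolding sim_def using bij_betw_finite by blast

lemma sim_card: "sim X Y \<Longrightarrow> card X = card Y"
  unfolding sim_def using bij_betw_same_card by blast


definition ins :: "nat \<Rightarrow> nat \<Rightarrow> nat set \<Rightarrow> nat set" where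
  "ins a s R = {x\<in>R. x < a} \<union> {a..<a+s} \<union> (\<lambda>x. x + (s+1)) ` {x\<in>R. a \<le> x}"

definition ext :: "nat \<Rightarrow> nat \<Rightarrow> nat set \<Rightarrow> nat set" where
  "ext a s Y = {x\<in>Y. x < a} \<union> (\<lambda>x. x - (s+1)) ` {x\<in>Y. a + s < x}"

lemma mem_ins: "x \<in> ins a s R \<longleftrightarrow> (x < a \<and> x \<in> R) \<or> (a \<le> x \<and> x < a + s) \<or> (a + s < x \<and> x - (s+1) \<in> R)"
proof
  assume "x \<in> ins a s R" then show "(x < a \<and> x \<in> R) \<or> (a \<le> x \<and> x < a + s) \<or> (a + s < x \<and> x - (s+1) \<in> R)"
    unfolding ins_def by auto
next
  assume h: "(x < a \<and> x \<in> R) \<or> (a \<le> x \<and> x < a + s) \<or> (a + s < x \<and> x - (s+1) \<in> R)"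
  show "x \<in> ins a s R"
  proof (cases "a + s < x")
    case True
    then have "x - (s+1) \<in> R" "a \<le> x - (s+1)" "x = (x - (s+1)) + (s+1)" using h by auto
    then show ?thesis unfolding ins_def by (metis (mono_tags, lifting) UnI2 image_eqI mem_Collect_eq)
  next
    case False then show ?thesis using h unfolding ins_def by auto
  qed
qed

lemma mem_ext: "x \<in> ext a s Y \<longleftrightarrow> (x < a \<and> x \<in> Y) \<or> (a \<le> x \<and> x + (s+1) \<in> Y)"
proof
  assume "x \<in> ext a s Y" then show "(x < a \<and> x \<in> Y) \<or> (a \<le> x \<and> x + (s+1) \<in> Y)"
    unfolding ext_def by auto
next
  assume h: "(x < a \<and> x \<in> Y) \<or> (a \<le> x \<and> x + (s+1) \<in> Y)"
  show "x \<in> ext a s Y"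
  proof (cases "x < a")
    case False
    then have "x + (s+1) \<in> Y" "a + s < x + (s+1)" "x = (x + (s+1)) - (s+1)" using h by auto
    then show ?thesis unfolding ext_def by (metis (mono_tags, lifting) UnI2 image_eqI mem_Collect_eq)
  next
    case True then show ?thesis using h unfolding ext_def by auto
  qed
qed

definition DomR :: "nat \<Rightarrow> nat \<Rightarrow> nat \<Rightarrow> nat set set" where
  "DomR N a s = {R. R \<subseteq> {1..N - s - 1} \<and> a - 1 \<notin> R}"

definition DomY :: "nat \<Rightarrow> nat \<Rightarrow> nat \<Rightarrow> nat set set" where
  "DomY N a s = {Y. Y \<subseteq> {1..N} \<and> {a..<a+s} \<subseteq> Y \<and> a - 1 \<notin> Y \<and> a + s \<notin> Y}"

lemma BL_bij:
  assumes "1 \<le> a" "a + s \<le> N + 1"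
  shows "bij_betw (ins a s) (DomR N a s) (DomY N a s)"
proof (rule bij_betw_byWitness[where f'="ext a s"])
  show "\<forall>R\<in>DomR N a s. ext a s (ins a s R) = R"
  proof
    fix R assume "R \<in> DomR N a s"
    show "ext a s (ins a s R) = R"
    proof (rule set_eqI)
      fix x show "x \<in> ext a s (ins a s R) \<longleftrightarrow> x \<in> R"
        unfolding mem_ext mem_ins by (cases "x < a") auto
    qed
  qed
  show "\<forall>Y\<in>DomY N a s. ins a s (ext a s Y) = Y"
  proof
    fix Y assume Y: "Y \<in> DomY N a s"
    show "ins a s (ext a s Y) = Y"
    proof (rule set_eqI)
      fix x
      have "x \<in> ins a s (ext a s Y) \<longleftrightarrow> (x < a \<and> x \<in> Y) \<or> (a \<le> x \<and> x < a + s) \<or> (a + s < x \<and> x \<in> Y)"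
        unfolding mem_ext mem_ins by (cases "x < a"; cases "a + s < x") auto
      also have "\<dots> \<longleftrightarrow> x \<in> Y" using Y unfolding DomY_def
        by (cases "x < a"; cases "a + s < x"; cases "x = a + s") auto
      finally show "x \<in> ins a s (ext a s Y) \<longleftrightarrow> x \<in> Y" .
    qed
  qed
  show "ins a s ` DomR N a s \<subseteq> DomY N a s"
  proof
    fix Y assume "Y \<in> ins a s ` DomR N a s"
    then obtain R where R: "R \<in> DomR N a s" and YR: "Y = ins a s R" by auto
    have "Y \<subseteq> {1..N}"
    proof
      fix x assume "x \<in> Y"
      then have "(x < a \<and> x \<in> R) \<or> (a \<le> x \<and> x < a + s) \<or> (a + s < x \<and> x - (s+1) \<in> R)"
        unfolding YR mem_ins .
      then show "x \<in> {1..N}"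
      proof (elim disjE)
        assume h: "a + s < x \<and> x - (s+1) \<in> R"
        then have "x - (s+1) \<in> {1..N - s - 1}" using R unfolding DomR_def by auto
        then show ?thesis using h by auto
      qed (use R assms in \<open>auto simp: DomR_def\<close>)
    qed
    moreover have "{a..<a+s} \<subseteq> Y" by (auto simp: YR mem_ins)
    moreover have "a - 1 \<notin> Y" using R assms by (auto simp: YR mem_ins DomR_def)
    moreover have "a + s \<notin> Y" by (auto simp: YR mem_ins)
    ultimately show "Y \<in> DomY N a s" unfolding DomY_def by auto
  qed
  show "ext a s ` DomY N a s \<subseteq> DomR N a s"
  proof
    fix R assume "R \<in> ext a s ` DomY N a s"
    then obtain Y where Y: "Y \<in> DomY N a s" and YR: "R = ext a s Y" by auto
    have "R \<subseteq> {1..N - s - 1}"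
    proof
      fix x assume "x \<in> R"
      then have h: "(x < a \<and> x \<in> Y) \<or> (a \<le> x \<and> x + (s+1) \<in> Y)"
        unfolding YR mem_ext .
      have "x \<noteq> a - 1 \<or> \<not> x < a" using Y unfolding DomY_def using h by auto
      then show "x \<in> {1..N - s - 1}" using h Y assms unfolding DomY_def by auto
    qed
    moreover have "a - 1 \<notin> R" using Y assms by (auto simp: YR mem_ext DomY_def)
    ultimately show "R \<in> DomR N a s" unfolding DomR_def by auto
  qed
qed


definition far :: "nat \<Rightarrow> nat set \<Rightarrow> nat set" where
  "far s R = {Max (insert 0 R) + 2 ..< Max (insert 0 R) + 2 + s}"

lemma far_ge: "finite R \<Longrightarrow> x \<in> R \<Longrightarrow> y \<in> far s R \<Longrightarrow> x + 2 \<le> y"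
proof -
  assume "finite R" "x \<in> R" "y \<in> far s R"
  then have "x \<le> Max (insert 0 R)" by simp
  then show ?thesis using \<open>y \<in> far s R\<close> unfolding far_def by auto
qed

lemma card_far: "card (far s R) = s" unfolding far_def by simp

lemma finite_far: "finite (far s R)" unfolding far_def by simp

lemma sim_ins:
  assumes "R \<in> DomR N a s"
  shows "sim (ins a s R) (R \<union> far s R)"
proof -
  have fin: "finite R" using assms unfolding DomR_def using finite_subset by blast
  have a1: "a - 1 \<notin> R" using assms unfolding DomR_def by auto
  define A where "A = {x\<in>R. x < a}"
  define B where "B = {x\<in>R. a \<le> x}"
  define B' where "B' = (\<lambda>x. x + (s+1)) ` B"
  define I where "I = {a..<a+s}"
  have e1: "ins a s R = (A \<union> B') \<union> I" unfolding ins_def A_def B_def B'_def I_def by auto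
  have e2: "R \<union> far s R = (A \<union> B) \<union> far s R" unfolding A_def B_def by auto
  have Ax: "x + 1 < a" if "x \<in> A" for x
  proof -
    have "x \<in> R" "x < a" using that unfolding A_def by auto
    then have "x \<noteq> a - 1" using a1 by auto
    then show ?thesis using \<open>x < a\<close> by auto
  qed
  have B'x: "a + s < y" if "y \<in> B'" for y using that unfolding B'_def B_def by auto
  have Bx: "a \<le> y" if "y \<in> B" for y using that unfolding B_def by auto
  have s1: "sim (A \<union> B') (A \<union> B)"
  proof (rule sim_union)
    show "sim A A" by (rule sim_refl)
    show "sim B' B" unfolding B'_def by (rule sim_sym[OF sim_shift])
    show "A \<inter> B' = {}" using Ax B'x by force
    show "A \<inter> B = {}" using Ax Bx by force
    show "\<forall>x\<in>A. \<forall>y\<in>B'. \<not> adj x y" using Ax B'x unfolding adj_def by force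
    show "\<forall>x\<in>A. \<forall>y\<in>B. \<not> adj x y" using Ax Bx unfolding adj_def by force
  qed
  have RA: "x \<in> R" if "x \<in> A \<union> B" for x using that unfolding A_def B_def by auto
  have "sim ((A \<union> B') \<union> I) ((A \<union> B) \<union> far s R)"
  proof (rule sim_union[OF s1])
    show "sim I (far s R)" unfolding I_def far_def by (rule sim_interval)
    show "(A \<union> B') \<inter> I = {}" using Ax B'x unfolding I_def by force
    show "(A \<union> B) \<inter> far s R = {}" using RA far_ge[OF fin] by force
    show "\<forall>x\<in>A \<union> B'. \<forall>y\<in>I. \<not> adj x y" using Ax B'x unfolding adj_def I_def by force
    show "\<forall>x\<in>A \<union> B. \<forall>y\<in>far s R. \<not> adj x y" using RA far_ge[OF fin] unfolding adj_def by force
  qed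
  then show ?thesis using e1 e2 by simp
qed

definition resp :: "(nat set \<Rightarrow> bool) \<Rightarrow> bool" where
  "resp P \<longleftrightarrow> (\<forall>X Y. sim X Y \<longrightarrow> P X \<longrightarrow> P Y)"

definition Phis :: "nat \<Rightarrow> (nat set \<Rightarrow> bool) \<Rightarrow> nat set \<Rightarrow> bool" where
  "Phis s P R \<longleftrightarrow> finite R \<and> P (R \<union> far s R)"

lemma sim_far:
  assumes "sim R R'" "finite R"
  shows "sim (R \<union> far s R) (R' \<union> far s R')"
proof -
  have fin': "finite R'" using sim_finite assms by blast
  show ?thesis
  proof (rule sim_union[OF assms(1)])
    show "sim (far s R) (far s R')" unfolding far_def by (rule sim_interval)
    show "R \<inter> far s R = {}" using far_ge[OF assms(2)] by force
    show "R' \<inter> far s R' = {}" using far_ge[OF fin'] by force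
    show "\<forall>x\<in>R. \<forall>y\<in>far s R. \<not> adj x y" using far_ge[OF assms(2)] unfolding adj_def by force
    show "\<forall>x\<in>R'. \<forall>y\<in>far s R'. \<not> adj x y" using far_ge[OF fin'] unfolding adj_def by force
  qed
qed

lemma resp_Phis: "resp P \<Longrightarrow> resp (Phis s P)"
  unfolding resp_def Phis_def using sim_far sim_finite by blast

lemma card_Phis:
  assumes "\<forall>Y. P Y \<longrightarrow> finite Y \<and> card Y = m" "Phis s P R"
  shows "finite R \<and> card R + s = m"
proof -
  have fin: "finite R" using assms(2) unfolding Phis_def by auto
  have "R \<inter> far s R = {}" using far_ge[OF fin] by force
  then have "card (R \<union> far s R) = card R + s" using fin finite_far card_far card_Un_disjoint by metis
  then show ?thesis using assms fin unfolding Phis_def by auto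
qed

lemma BL_card:
  assumes "resp P" "1 \<le> a" "a + s \<le> N + 1"
  shows "card {Y \<in> DomY N a s. P Y} = card {R \<in> DomR N a s. Phis s P R}"
proof -
  have bij: "bij_betw (ins a s) (DomR N a s) (DomY N a s)" using BL_bij assms(2,3) .
  have finR: "finite R" if "R \<in> DomR N a s" for R using that unfolding DomR_def using finite_subset by blast
  have eq: "P (ins a s R) \<longleftrightarrow> Phis s P R" if "R \<in> DomR N a s" for R
    using sim_ins[OF that] sim_sym[OF sim_ins[OF that]] assms(1) finR[OF that]
    unfolding resp_def Phis_def by blast
  have "{Y \<in> DomY N a s. P Y} = ins a s ` {R \<in> DomR N a s. Phis s P R}"
  proof -
    have "{Y \<in> DomY N a s. P Y} = ins a s ` {R \<in> DomR N a s. P (ins a s R)}"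
    proof
      show "{Y \<in> DomY N a s. P Y} \<subseteq> ins a s ` {R \<in> DomR N a s. P (ins a s R)}"
      proof
        fix Y assume Y: "Y \<in> {Y \<in> DomY N a s. P Y}"
        then obtain R where "R \<in> DomR N a s" "Y = ins a s R" using bij unfolding bij_betw_def by blast
        then show "Y \<in> ins a s ` {R \<in> DomR N a s. P (ins a s R)}" using Y by blast
      qed
    qed (use bij in \<open>auto simp: bij_betw_def\<close>)
    also have "\<dots> = ins a s ` {R \<in> DomR N a s. Phis s P R}" using eq by auto
    finally show ?thesis .
  qed
  moreover have "inj_on (ins a s) {R \<in> DomR N a s. Phis s P R}"
    using bij unfolding bij_betw_def by (auto intro: inj_on_subset)
  ultimately show ?thesis by (simp add: card_image)
qed


definition g :: "(nat set \<Rightarrow> bool) \<Rightarrow> nat \<Rightarrow> nat \<Rightarrow> nat" where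
  "g P N p = card {Y. Y \<subseteq> {1..N} \<and> p \<in> Y \<and> P Y}"

lemma run_extract:
  fixes Y :: "nat set" and N p :: nat
  assumes "Y \<subseteq> {1..N}" "p \<in> Y"
  shows "\<exists>a b. 1 \<le> a \<and> a \<le> p \<and> p \<le> b \<and> {a..b} \<subseteq> Y \<and> a - 1 \<notin> Y \<and> b + 1 \<notin> Y"
proof -
  define S where "S = {x. x \<le> p \<and> {x..p} \<subseteq> Y}"
  define T where "T = {x. p \<le> x \<and> {p..x} \<subseteq> Y}"
  have pS: "p \<in> S" using assms unfolding S_def by simp
  have pT: "p \<in> T" using assms unfolding T_def by simp
  have fS: "finite S" unfolding S_def by (rule finite_subset[of _ "{..p}"]) auto
  have fT: "finite T"
  proof (rule finite_subset[of _ "{..N}"])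
    show "T \<subseteq> {..N}"
    proof
      fix x assume "x \<in> T"
      then have "x \<in> Y" unfolding T_def by auto
      then show "x \<in> {..N}" using assms by auto
    qed
  qed auto
  define a where "a = Min S"
  define b where "b = Max T"
  have aS: "a \<in> S" unfolding a_def using fS pS Min_in by blast
  have bT: "b \<in> T" unfolding b_def using fT pT Max_in by blast
  have aY: "{a..p} \<subseteq> Y" "a \<le> p" using aS unfolding S_def by auto
  have bY: "{p..b} \<subseteq> Y" "p \<le> b" using bT unfolding T_def by auto
  have "a \<in> Y" using aY by auto
  then have a1: "1 \<le> a" using assms(1) by auto
  have "a - 1 \<notin> Y"
  proof
    assume "a - 1 \<in> Y"
    have "{a - 1..p} \<subseteq> Y"
    proof
      fix x assume x: "x \<in> {a - 1..p}"
      show "x \<in> Y"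
      proof (cases "x = a - 1")
        case True then show ?thesis using \<open>a - 1 \<in> Y\<close> by simp
      next
        case False then have "x \<in> {a..p}" using x by auto
        then show ?thesis using aY by auto
      qed
    qed
    then have "a - 1 \<in> S" using aY unfolding S_def by auto
    then have "a \<le> a - 1" unfolding a_def using fS Min_le by blast
    then show False using a1 by auto
  qed
  moreover have "b + 1 \<notin> Y"
  proof
    assume "b + 1 \<in> Y"
    have "{p..b+1} \<subseteq> Y"
    proof
      fix x assume x: "x \<in> {p..b+1}"
      show "x \<in> Y"
      proof (cases "x = b + 1")
        case True then show ?thesis using \<open>b + 1 \<in> Y\<close> by simp
      next
        case False then have "x \<in> {p..b}" using x by auto
        then show ?thesis using bY by auto
      qed
    qed
    then have "b + 1 \<in> T" using bY unfolding T_def by auto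
    then have "b + 1 \<le> b" unfolding b_def using fT Max_ge by blast
    then show False by auto
  qed
  moreover have "{a..b} \<subseteq> Y"
  proof
    fix x assume "x \<in> {a..b}"
    then have "x \<in> {a..p} \<or> x \<in> {p..b}" by auto
    then show "x \<in> Y" using aY bY by blast
  qed
  ultimately show ?thesis using a1 aY bY by blast
qed

lemma finite_DomY: "finite {Y \<in> DomY N a s. P Y}"
  by (rule finite_subset[of _ "Pow {1..N}"]) (auto simp: DomY_def)

lemma decomp:
  assumes "\<forall>Y. P Y \<longrightarrow> finite Y \<and> card Y = m" "m \<le> p" "p + m \<le> N + 1"
  shows "g P N p = (\<Sum>i \<in> Sigma {1..m} (\<lambda>s. {..<s}). card {Y \<in> DomY N (p - snd i) (fst i). P Y})"
proof -
  define I where "I = Sigma {1..m} (\<lambda>s. {..<s})"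
  define A where "A i = {Y \<in> DomY N (p - snd i) (fst i). P Y}" for i
  have "{Y. Y \<subseteq> {1..N} \<and> p \<in> Y \<and> P Y} = (\<Union>i\<in>I. A i)"
  proof
    show "{Y. Y \<subseteq> {1..N} \<and> p \<in> Y \<and> P Y} \<subseteq> (\<Union>i\<in>I. A i)"
    proof
      fix Y assume Y: "Y \<in> {Y. Y \<subseteq> {1..N} \<and> p \<in> Y \<and> P Y}"
      then obtain a b where ab: "1 \<le> a" "a \<le> p" "p \<le> b" "{a..b} \<subseteq> Y" "a - 1 \<notin> Y" "b + 1 \<notin> Y"
        using run_extract[of Y N p] by auto
      have fY: "finite Y" "card Y = m" using Y assms(1) by auto
      have "card {a..b} \<le> card Y" using ab(4) fY card_mono by blast
      then have sm: "b + 1 - a \<le> m" using fY by simp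
      define s where "s = b + 1 - a"
      define t where "t = p - a"
      have "(s, t) \<in> I" unfolding I_def s_def t_def using sm ab by auto
      moreover have "p - t = a" unfolding t_def using ab by auto
      moreover have "{a..<a+s} = {a..b}" unfolding s_def using ab by auto
      moreover have "a + s = b + 1" unfolding s_def using ab by auto
      ultimately have "Y \<in> A (s, t)" unfolding A_def DomY_def using Y ab by auto
      then show "Y \<in> (\<Union>i\<in>I. A i)" using \<open>(s, t) \<in> I\<close> by blast
    qed
    show "(\<Union>i\<in>I. A i) \<subseteq> {Y. Y \<subseteq> {1..N} \<and> p \<in> Y \<and> P Y}"
    proof
      fix Y assume "Y \<in> (\<Union>i\<in>I. A i)"
      then obtain s t where st: "(s, t) \<in> I" "Y \<in> A (s, t)" by auto
      then have "t < s" "s \<le> m" unfolding I_def by auto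
      then have "p \<in> {p - t..<p - t + s}" using assms by auto
      then show "Y \<in> {Y. Y \<subseteq> {1..N} \<and> p \<in> Y \<and> P Y}" using st(2) unfolding A_def DomY_def by auto
    qed
  qed
  moreover have "card (\<Union>i\<in>I. A i) = (\<Sum>i\<in>I. card (A i))"
  proof (rule card_UN_disjoint)
    show "finite I" unfolding I_def by auto
    show "\<forall>i\<in>I. finite (A i)" unfolding A_def using finite_DomY by blast
    show "\<forall>i\<in>I. \<forall>j\<in>I. i \<noteq> j \<longrightarrow> A i \<inter> A j = {}"
    proof (intro ballI impI)
      fix i j assume ij: "i \<in> I" "j \<in> I" "i \<noteq> j"
      obtain s1 t1 where i: "i = (s1, t1)" by (cases i)
      obtain s2 t2 where j: "j = (s2, t2)" by (cases j)
      have c: "t1 < s1" "s1 \<le> m" "t2 < s2" "s2 \<le> m" using ij unfolding i j I_def by auto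
      show "A i \<inter> A j = {}"
      proof (rule ccontr)
        assume "A i \<inter> A j \<noteq> {}"
        then obtain Y where Y: "Y \<in> DomY N (p - t1) s1" "Y \<in> DomY N (p - t2) s2" unfolding A_def i j by auto
        define a1 where "a1 = p - t1"
        define a2 where "a2 = p - t2"
        have Y1: "{a1..<a1+s1} \<subseteq> Y" "a1 - 1 \<notin> Y" "a1 + s1 \<notin> Y" using Y(1) unfolding DomY_def a1_def by auto
        have Y2: "{a2..<a2+s2} \<subseteq> Y" "a2 - 1 \<notin> Y" "a2 + s2 \<notin> Y" using Y(2) unfolding DomY_def a2_def by auto
        have r1: "a1 \<le> p" "p < a1 + s1" "1 \<le> a1" unfolding a1_def using c assms by auto
        have r2: "a2 \<le> p" "p < a2 + s2" "1 \<le> a2" unfolding a2_def using c assms by auto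
        have "a1 = a2"
        proof (rule ccontr)
          assume "a1 \<noteq> a2"
          then consider "a1 < a2" | "a2 < a1" by linarith
          then show False
          proof cases
            case 1
            then have "a2 - 1 \<in> {a1..<a1+s1}" using r1 r2 by auto
            then show False using Y1 Y2 by auto
          next
            case 2
            then have "a1 - 1 \<in> {a2..<a2+s2}" using r1 r2 by auto
            then show False using Y1 Y2 by auto
          qed
        qed
        have "s1 = s2"
        proof (rule ccontr)
          assume "s1 \<noteq> s2"
          then consider "s1 < s2" | "s2 < s1" by linarith
          then show False
          proof cases
            case 1
            then have "a1 + s1 \<in> {a2..<a2+s2}" using \<open>a1 = a2\<close> by auto
            then show False using Y1 Y2 by auto
          next
            case 2
            then have "a2 + s2 \<in> {a1..<a1+s1}" using \<open>a1 = a2\<close> by auto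
            then show False using Y1 Y2 by auto
          qed
        qed
        moreover have "t1 = t2" using \<open>a1 = a2\<close> c assms unfolding a1_def a2_def by auto
        ultimately show False using ij(3) unfolding i j by auto
      qed
    qed
  qed
  ultimately show ?thesis unfolding g_def I_def A_def by simp
qed


lemma split_card:
  "card {R. R \<subseteq> {1..K} \<and> q \<notin> R \<and> P R} = card {R. R \<subseteq> {1..K} \<and> P R} - g P K q"
proof -
  have "{R. R \<subseteq> {1..K} \<and> q \<notin> R \<and> P R} = {R. R \<subseteq> {1..K} \<and> P R} - {Y. Y \<subseteq> {1..K} \<and> q \<in> Y \<and> P Y}"
    by auto
  moreover have "finite {Y. Y \<subseteq> {1..K} \<and> q \<in> Y \<and> P Y}"
    by (rule finite_subset[of _ "Pow {1..K}"]) auto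
  moreover have "{Y. Y \<subseteq> {1..K} \<and> q \<in> Y \<and> P Y} \<subseteq> {R. R \<subseteq> {1..K} \<and> P R}" by auto
  ultimately show ?thesis unfolding g_def by (simp only: card_Diff_subset)
qed

lemma term_eq:
  assumes "resp P" "1 \<le> a" "a + s \<le> N + 1"
  shows "card {Y \<in> DomY N a s. P Y} = card {R. R \<subseteq> {1..N - s - 1} \<and> Phis s P R} - g (Phis s P) (N - s - 1) (a - 1)"
proof -
  have "card {Y \<in> DomY N a s. P Y} = card {R \<in> DomR N a s. Phis s P R}" using BL_card assms .
  also have "{R \<in> DomR N a s. Phis s P R} = {R. R \<subseteq> {1..N - s - 1} \<and> a - 1 \<notin> R \<and> Phis s P R}"
    unfolding DomR_def by auto
  finally show ?thesis using split_card by simp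
qed

lemma Cnt:
  "resp P \<Longrightarrow> \<forall>Y. P Y \<longrightarrow> finite Y \<and> card Y = m \<Longrightarrow> m \<le> p \<Longrightarrow> p + m \<le> N + 1
   \<Longrightarrow> m \<le> p' \<Longrightarrow> p' + m \<le> N + 1 \<Longrightarrow> g P N p = g P N p'"
proof (induction m arbitrary: P N p p' rule: less_induct)
  case (less m)
  show ?case
  proof -
    have "g P N p = (\<Sum>i \<in> Sigma {1..m} (\<lambda>s. {..<s}). card {Y \<in> DomY N (p - snd i) (fst i). P Y})"
      using decomp less.prems by blast
    also have "\<dots> = (\<Sum>i \<in> Sigma {1..m} (\<lambda>s. {..<s}). card {Y \<in> DomY N (p' - snd i) (fst i). P Y})"
    proof (rule sum.cong[OF refl])
      fix i assume "i \<in> Sigma {1..m} (\<lambda>s. {..<s})"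
      then obtain s t where i: "i = (s, t)" "1 \<le> s" "s \<le> m" "t < s" by auto
      have IH: "g (Phis s P) (N - s - 1) (p - t - 1) = g (Phis s P) (N - s - 1) (p' - t - 1)"
      proof (rule less.IH[of "m - s"])
        show "m - s < m" using i by auto
        show "resp (Phis s P)" using resp_Phis less.prems by blast
        show "\<forall>Y. Phis s P Y \<longrightarrow> finite Y \<and> card Y = m - s"
        proof (intro allI impI)
          fix Y assume "Phis s P Y"
          then have "finite Y \<and> card Y + s = m" using card_Phis[OF less.prems(2)] by blast
          then show "finite Y \<and> card Y = m - s" by auto
        qed
        show "m - s \<le> p - t - 1" using i(2,3,4) less.prems(3,4) by linarith
        show "m - s \<le> p' - t - 1" using i(2,3,4) less.prems(5,6) by linarith
        show "p - t - 1 + (m - s) \<le> N - s - 1 + 1" using i(2,3,4) less.prems(3,4) by linarith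
        show "p' - t - 1 + (m - s) \<le> N - s - 1 + 1" using i(2,3,4) less.prems(5,6) by linarith
      qed
      have e1: "card {Y \<in> DomY N (p - t) s. P Y} = card {R. R \<subseteq> {1..N - s - 1} \<and> Phis s P R} - g (Phis s P) (N - s - 1) (p - t - 1)"
        using term_eq[of P "p - t" s N] less.prems i by (simp add: diff_diff_add)
      have e2: "card {Y \<in> DomY N (p' - t) s. P Y} = card {R. R \<subseteq> {1..N - s - 1} \<and> Phis s P R} - g (Phis s P) (N - s - 1) (p' - t - 1)"
        using term_eq[of P "p' - t" s N] less.prems i by (simp add: diff_diff_add)
      show "card {Y \<in> DomY N (p - snd i) (fst i). P Y} = card {Y \<in> DomY N (p' - snd i) (fst i). P Y}"
        using e1 e2 IH i by simp
    qed
    also have "\<dots> = g P N p'"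
      using decomp[of P m p' N] less.prems by simp
    finally show ?thesis .
  qed
qed


definition G' :: "nat set \<Rightarrow> nat graph" where
  "G' X = (X, {{u, u+1} | u. u \<in> X \<and> u + 1 \<in> X})"

lemma induced_path: assumes "X \<subseteq> {1..n}" shows "induced (path_graph n) X = G' X"
proof -
  have 1: "X \<inter> {1..n} = X" using assms by auto
  have 2: "{e \<in> {{i, i + 1} | i. 1 \<le> i \<and> i < n}. e \<subseteq> X} = {{u, u+1} | u. u \<in> X \<and> u + 1 \<in> X}"
  proof (rule set_eqI, rule iffI)
    fix e assume "e \<in> {e \<in> {{i, i + 1} | i. 1 \<le> i \<and> i < n}. e \<subseteq> X}"
    then obtain i where "e = {i, i+1}" "{i, i+1} \<subseteq> X" by auto
    then show "e \<in> {{u, u+1} | u. u \<in> X \<and> u + 1 \<in> X}" by auto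
  next
    fix e assume "e \<in> {{u, u+1} | u. u \<in> X \<and> u + 1 \<in> X}"
    then obtain u where u: "e = {u, u+1}" "u \<in> X" "u + 1 \<in> X" by auto
    then have "1 \<le> u" "u < n" using assms by force+
    then show "e \<in> {e \<in> {{i, i + 1} | i. 1 \<le> i \<and> i < n}. e \<subseteq> X}" using u by auto
  qed
  show ?thesis unfolding induced_def path_graph_def G'_def verts_def edges_def using 1 2 by simp
qed

lemma G'_edge: "u \<in> X \<Longrightarrow> v \<in> X \<Longrightarrow> {u, v} \<in> edges (G' X) \<longleftrightarrow> adj u v"
  unfolding G'_def edges_def adj_def by (auto simp: doubleton_eq_iff)

lemma sim_iso: assumes "sim X Y" shows "graph_iso (G' X) (G' Y)"
proof -
  obtain f where f: "bij_betw f X Y" "\<forall>u\<in>X. \<forall>v\<in>X. adj u v \<longleftrightarrow> adj (f u) (f v)"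
    using assms unfolding sim_def by blast
  have "\<forall>u\<in>X. \<forall>v\<in>X. {u, v} \<in> edges (G' X) \<longleftrightarrow> {f u, f v} \<in> edges (G' Y)"
    using f G'_edge bij_betwE[OF f(1)] by metis
  then show ?thesis unfolding graph_iso_def using f(1) by (auto simp: G'_def verts_def)
qed

lemma iso_trans:
  fixes A :: "'a graph" and B :: "'b graph" and C :: "'c graph"
  assumes "graph_iso A B" "graph_iso B C" shows "graph_iso A C"
proof -
  obtain f where f: "bij_betw f (verts A) (verts B)"
    "\<forall>u\<in>verts A. \<forall>v\<in>verts A. {u, v} \<in> edges A \<longleftrightarrow> {f u, f v} \<in> edges B"
    using assms(1) unfolding graph_iso_def by blast
  obtain g where g: "bij_betw g (verts B) (verts C)"
    "\<forall>u\<in>verts B. \<forall>v\<in>verts B. {u, v} \<in> edges B \<longleftrightarrow> {g u, g v} \<in> edges C"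
    using assms(2) unfolding graph_iso_def by blast
  have "bij_betw (g \<circ> f) (verts A) (verts C)" using f(1) g(1) by (rule bij_betw_trans)
  moreover have "\<forall>u\<in>verts A. \<forall>v\<in>verts A. {u, v} \<in> edges A \<longleftrightarrow> {(g \<circ> f) u, (g \<circ> f) v} \<in> edges C"
    using f g bij_betwE[OF f(1)] by simp
  ultimately show ?thesis unfolding graph_iso_def by blast
qed

lemma iso_sym:
  fixes A :: "'a graph" and B :: "'b graph"
  assumes "graph_iso A B" shows "graph_iso B A"
proof -
  obtain f where f: "bij_betw f (verts A) (verts B)"
    "\<forall>u\<in>verts A. \<forall>v\<in>verts A. {u, v} \<in> edges A \<longleftrightarrow> {f u, f v} \<in> edges B"
    using assms(1) unfolding graph_iso_def by blast
  let ?g = "inv_into (verts A) f"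
  have "bij_betw ?g (verts B) (verts A)" using f(1) by (rule bij_betw_inv_into)
  moreover have "\<forall>u\<in>verts B. \<forall>v\<in>verts B. {u, v} \<in> edges B \<longleftrightarrow> {?g u, ?g v} \<in> edges A"
  proof (intro ballI)
    fix u v assume uv: "u \<in> verts B" "v \<in> verts B"
    have "?g u \<in> verts A" "?g v \<in> verts A" "f (?g u) = u" "f (?g v) = v"
      using f(1) uv by (auto simp: bij_betw_def inv_into_into f_inv_into_f)
    then show "{u, v} \<in> edges B \<longleftrightarrow> {?g u, ?g v} \<in> edges A" using f(2) by metis
  qed
  ultimately show ?thesis unfolding graph_iso_def by blast
qed

lemma resp_Psi: "resp (\<lambda>Y. graph_iso (G' Y) L)"
  unfolding resp_def using sim_iso sim_sym iso_trans by blast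

lemma isolated_G': assumes "1 \<le> h" shows "isolated_in h (G' X) \<longleftrightarrow> h \<in> X \<and> h - 1 \<notin> X \<and> h + 1 \<notin> X"
proof -
  have "(\<forall>e\<in>{{u, u+1} | u. u \<in> X \<and> u + 1 \<in> X}. h \<notin> e) \<longleftrightarrow> (\<forall>u. u \<in> X \<longrightarrow> u + 1 \<in> X \<longrightarrow> h \<noteq> u \<and> h \<noteq> u + 1)"
    by blast
  also have "\<dots> \<longleftrightarrow> (h \<in> X \<longrightarrow> h + 1 \<notin> X) \<and> (h - 1 \<in> X \<longrightarrow> h \<notin> X)"
  proof
    assume a: "\<forall>u. u \<in> X \<longrightarrow> u + 1 \<in> X \<longrightarrow> h \<noteq> u \<and> h \<noteq> u + 1"
    have "h - 1 + 1 = h" using assms by simp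
    then show "(h \<in> X \<longrightarrow> h + 1 \<notin> X) \<and> (h - 1 \<in> X \<longrightarrow> h \<notin> X)" using a[rule_format, of h] a[rule_format, of "h - 1"] by metis
  next
    assume a: "(h \<in> X \<longrightarrow> h + 1 \<notin> X) \<and> (h - 1 \<in> X \<longrightarrow> h \<notin> X)"
    show "\<forall>u. u \<in> X \<longrightarrow> u + 1 \<in> X \<longrightarrow> h \<noteq> u \<and> h \<noteq> u + 1"
    proof (intro allI impI)
      fix u assume "u \<in> X" "u + 1 \<in> X"
      then show "h \<noteq> u \<and> h \<noteq> u + 1" using a by (metis add_diff_cancel_right')
    qed
  qed
  finally show ?thesis unfolding isolated_in_def G'_def verts_def edges_def by auto
qed


lemma verts_path: "verts (path_graph n) = {1..n}" unfolding path_graph_def verts_def by simp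

lemma sprime_eq:
  assumes "1 \<le> h"
  shows "s_prime h n L = card {Y \<in> DomY n h 1. graph_iso (G' Y) L}"
proof -
  have "{X. X \<subseteq> verts (path_graph n) \<and> h \<in> X \<and>
       graph_iso (induced (path_graph n) X) L \<and> isolated_in h (induced (path_graph n) X)}
     = {Y \<in> DomY n h 1. graph_iso (G' Y) L}"
  proof (rule set_eqI)
    fix X
    show "X \<in> {X. X \<subseteq> verts (path_graph n) \<and> h \<in> X \<and>
       graph_iso (induced (path_graph n) X) L \<and> isolated_in h (induced (path_graph n) X)} \<longleftrightarrow>
      X \<in> {Y \<in> DomY n h 1. graph_iso (G' Y) L}"
    proof (cases "X \<subseteq> {1..n}")
      case True
      then show ?thesis using induced_path[OF True] isolated_G'[OF assms]
        unfolding verts_path DomY_def by auto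
    next
      case False
      then show ?thesis unfolding verts_path DomY_def by auto
    qed
  qed
  then show ?thesis unfolding s_prime_def by simp
qed

lemma sprime_zero:
  assumes "card (verts L) = 0"
  shows "s_prime h n L = 0"
proof -
  have "{X. X \<subseteq> verts (path_graph n) \<and> h \<in> X \<and>
       graph_iso (induced (path_graph n) X) L \<and> isolated_in h (induced (path_graph n) X)} = {}"
  proof (rule ccontr)
    assume "\<not> ?thesis"
    then obtain X where X: "X \<subseteq> {1..n}" "h \<in> X" "graph_iso (induced (path_graph n) X) L"
      unfolding verts_path by auto
    then obtain f where f: "bij_betw f X (verts L)"
      unfolding graph_iso_def induced_path[OF X(1)] G'_def verts_def by auto
    have "finite X" using X(1) finite_subset by blast
    then have "finite (verts L)" "card X = card (verts L)"
      using f bij_betw_finite bij_betw_same_card by blast+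
    then have "X = {}" using assms \<open>finite X\<close> by simp
    then show False using X(2) by simp
  qed
  note e = this
  show ?thesis unfolding s_prime_def e by simp
qed

lemma card_Psi:
  assumes "card (verts L) = k" "1 \<le> k"
  shows "\<forall>Y. graph_iso (G' Y) L \<longrightarrow> finite Y \<and> card Y = k"
proof (intro allI impI)
  fix Y assume "graph_iso (G' Y) L"
  then obtain f where f: "bij_betw f Y (verts L)" unfolding graph_iso_def G'_def verts_def by auto
  have "finite (verts L)" using assms card.infinite by fastforce
  then show "finite Y \<and> card Y = k" using f bij_betw_finite bij_betw_same_card assms by metis
qed

lemma main_formula:
  assumes "card (verts L) = k" "1 \<le> k" "1 \<le> h" "h \<le> n"
  shows "s_prime h n L = card {R. R \<subseteq> {1..n - 1 - 1} \<and> Phis 1 (\<lambda>Y. graph_iso (G' Y) L) R}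
     - g (Phis 1 (\<lambda>Y. graph_iso (G' Y) L)) (n - 1 - 1) (h - 1)"
  using sprime_eq[OF assms(3), of n L] term_eq[OF resp_Psi[of L], of h 1 n] assms by simp

theorem lemma2p3:
  fixes L :: "'b graph" and n k h h' :: nat
  assumes "linear_forest L" and "card (verts L) = k"
    and "k \<le> h" and "h + k \<le> n + 1"
    and "k \<le> h'" and "h' + k \<le> n + 1"
  shows "s_prime h n L = s_prime h' n L"
proof (cases "k = 0")
  case True
  then show ?thesis using sprime_zero assms(2) by metis
next
  case False
  then have k1: "1 \<le> k" by simp
  let ?P = "Phis 1 (\<lambda>Y. graph_iso (G' Y) L)"
  have "g ?P (n - 1 - 1) (h - 1) = g ?P (n - 1 - 1) (h' - 1)"
  proof (rule Cnt[where m = "k - 1"])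
    show "resp ?P" using resp_Phis resp_Psi by blast
    show "\<forall>Y. ?P Y \<longrightarrow> finite Y \<and> card Y = k - 1"
    proof (intro allI impI)
      fix Y assume "?P Y"
      then have "finite Y \<and> card Y + 1 = k" using card_Phis[OF card_Psi[OF assms(2) k1]] by blast
      then show "finite Y \<and> card Y = k - 1" by auto
    qed
    show "k - 1 \<le> h - 1" using assms by linarith
    show "k - 1 \<le> h' - 1" using assms by linarith
    show "h - 1 + (k - 1) \<le> n - 1 - 1 + 1" using assms k1 by linarith
    show "h' - 1 + (k - 1) \<le> n - 1 - 1 + 1" using assms k1 by linarith
  qed
  moreover have "s_prime h n L = card {R. R \<subseteq> {1..n - 1 - 1} \<and> ?P R} - g ?P (n - 1 - 1) (h - 1)"
  proof -
    have "1 \<le> h" "h \<le> n" using assms k1 by linarith+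
    then show ?thesis using main_formula[OF assms(2) k1] by blast
  qed
  moreover have "s_prime h' n L = card {R. R \<subseteq> {1..n - 1 - 1} \<and> ?P R} - g ?P (n - 1 - 1) (h' - 1)"
  proof -
    have "1 \<le> h'" "h' \<le> n" using assms k1 by linarith+
    then show ?thesis using main_formula[OF assms(2) k1] by blast
  qed
  ultimately show ?thesis by simp
qed

end
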